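(* Let $\sigma$ be a nonnegative finite measure on $\mathbb{R}^2$ which is upper $\alpha$-Ahlfors regular for some $\alpha>1$ and constants $M,r_*>0$, with $0<\sigma(\mathbb{R}^2)=\Phi\le Mr_*^\alpha$. Let $X=\frac1\Phi\int_{\mathbb{R}^2}x\,d\sigma(x)$ and $r=\frac1\Phi\int_{\mathbb{R}^2}|x-X|\,d\sigma(x)$. Then $$M^{1/\alpha}r\gtrsim_\alpha\Phi^{1/\alpha}.$$
   Context: For $\alpha\in[0,2]$, a nonnegative finite measure $\sigma$ on $\mathbb{R}^2$ is upper $\alpha$-Ahlfors regular with constants $M,r_*>0$ if $\sigma(B(x,r))\le Mr^\alpha$ for all $x\in\operatorname{supp}\sigma$ and all $r\in(0,r_*]$. $A\gtrsim_\alpha B$ means $A\ge cB$ with $c>0$ depending only on $\alpha$. *)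

theory Defs
  imports "HOL-Analysis.Analysis"
begin

definition measure_support :: "'a::metric_space measure \<Rightarrow> 'a set" where
  "measure_support \<sigma> = {x. \<forall>e>0. emeasure \<sigma> (ball x e) > 0}"

definition upper_ahlfors_regular ::
  "real \<Rightarrow> real \<Rightarrow> real \<Rightarrow> (real^2) measure \<Rightarrow> bool" where
  "upper_ahlfors_regular \<alpha> M rs \<sigma> \<longleftrightarrow>
     0 \<le> \<alpha> \<and> \<alpha> \<le> 2 \<and> M > 0 \<and> rs > 0 \<and>
     (\<forall>x\<in>measure_support \<sigma>. \<forall>r. 0 < r \<and> r \<le> rs \<longrightarrow>
        emeasure \<sigma> (ball x r) \<le> ennreal (M * r powr \<alpha>))"

end

theory Submission
  imports Defs
begin

lemma support_point:
  fixes \<sigma> :: "(real^2) measure"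
  assumes sets: "sets \<sigma> = sets borel" and C: "compact C" and pos: "emeasure \<sigma> C > 0"
  shows "\<exists>y\<in>C. y \<in> measure_support \<sigma>"
proof (rule ccontr)
  assume "\<not> ?thesis"
  then have "\<forall>x\<in>C. \<exists>e>0. emeasure \<sigma> (ball x e) = 0"
    by (auto simp: measure_support_def not_less)
  from bchoice[OF this] obtain e where e0: "\<forall>x\<in>C. e x > 0 \<and> emeasure \<sigma> (ball x (e x)) = 0"
    by blast
  then have e: "\<And>x. x \<in> C \<Longrightarrow> e x > 0 \<and> emeasure \<sigma> (ball x (e x)) = 0" by blast
  have cover: "C \<subseteq> (\<Union>x\<in>C. ball x (e x))"
  proof
    fix x assume "x \<in> C"
    then have "x \<in> ball x (e x)" using e by simp
    then show "x \<in> (\<Union>x\<in>C. ball x (e x))" using \<open>x \<in> C\<close> by blast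
  qed
  have op: "\<And>x. x \<in> C \<Longrightarrow> open (ball x (e x))" by simp
  obtain T where T: "T \<subseteq> C" "finite T" "C \<subseteq> (\<Union>x\<in>T. ball x (e x))"
    by (rule compactE_image[of C C "\<lambda>x. ball x (e x)", OF C op cover])
  have sb: "(\<lambda>x. ball x (e x)) ` T \<subseteq> sets \<sigma>"
    by (intro image_subsetI) (simp add: sets)
  have "emeasure \<sigma> C \<le> emeasure \<sigma> (\<Union>x\<in>T. ball x (e x))"
    by (rule emeasure_mono[OF T(3)]) (unfold sets, intro borel_open open_UN ballI open_ball)
  also have "\<dots> \<le> (\<Sum>x\<in>T. emeasure \<sigma> (ball x (e x)))"
    by (rule emeasure_subadditive_finite[OF T(2) sb])
  also have "\<dots> = 0"
  proof (rule sum.neutral, rule ballI)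
    fix x assume "x \<in> T"
    then have "x \<in> C" using T(1) by blast
    then show "emeasure \<sigma> (ball x (e x)) = 0" using e by blast
  qed
  finally show False using pos by simp
qed

lemma key:
  fixes \<sigma> :: "(real^2) measure" and X :: "real^2"
  assumes sets: "sets \<sigma> = sets borel" and fin: "finite_measure \<sigma>"
    and ar: "upper_ahlfors_regular \<alpha> M rs \<sigma>" and a1: "1 < \<alpha>"
    and Phi: "\<Phi> = measure \<sigma> UNIV" and Phipos: "0 < \<Phi>" and Phile: "\<Phi> \<le> M * rs powr \<alpha>"
    and intn: "integrable \<sigma> (\<lambda>x. norm (x - X))"
    and t: "t > 0" and tr: "2 * (\<integral>x. norm (x - X) \<partial>\<sigma>) \<le> t * \<Phi>"
  shows "\<Phi> / 2 \<le> M * (3 * t) powr \<alpha>"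
proof -
  interpret finite_measure \<sigma> by (rule fin)
  have sp: "space \<sigma> = UNIV" using sets_eq_imp_space_eq[OF sets] by simp
  have M0: "M > 0" and rs0: "rs > 0" using ar by (auto simp: upper_ahlfors_regular_def)
  have mk: "measure \<sigma> {x\<in>space \<sigma>. t \<le> norm (x - X)} \<le> (\<integral>x. norm (x - X) \<partial>\<sigma>) / t"
    by (rule integral_Markov_inequality_measure[OF intn]) (use t in auto)
  have eqs: "{x\<in>space \<sigma>. t \<le> norm (x - X)} = space \<sigma> - ball X t"
    by (auto simp: sp dist_norm norm_minus_commute)
  have "(\<integral>x. norm (x - X) \<partial>\<sigma>) / t \<le> \<Phi> / 2"
    using tr t by (simp add: field_simps)
  have bsets: "ball X t \<in> sets \<sigma>" using sets by simp
  have "measure \<sigma> (space \<sigma> - ball X t) = \<Phi> - measure \<sigma> (ball X t)"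
    using finite_measure_compl[OF bsets] Phi sp by simp
  then have mb: "\<Phi> / 2 \<le> measure \<sigma> (ball X t)"
    using mk \<open>(\<integral>x. norm (x - X) \<partial>\<sigma>) / t \<le> \<Phi> / 2\<close> unfolding eqs by linarith
  have mc: "measure \<sigma> (ball X t) \<le> measure \<sigma> (cball X t)"
    by (rule finite_measure_mono[OF ball_subset_cball]) (unfold sets, intro borel_closed closed_cball)
  have "emeasure \<sigma> (cball X t) > 0"
    using mb mc Phipos by (simp add: emeasure_eq_measure sets borel_closed)
  then have "\<exists>y\<in>cball X t. y \<in> measure_support \<sigma>"
    by (rule support_point[OF sets compact_cball])
  then obtain y where y: "y \<in> cball X t" "y \<in> measure_support \<sigma>"
    by blast
  have sub: "cball X t \<subseteq> ball y (3 * t)"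
  proof
    fix z assume "z \<in> cball X t"
    then have d1: "dist X z \<le> t" by simp
    have d2: "dist X y \<le> t" using y(1) by simp
    have "dist y z \<le> dist y X + dist X z" by (rule dist_triangle)
    then have "dist y z \<le> 2 * t" using d1 d2 dist_commute[of y X] by linarith
    then show "z \<in> ball y (3 * t)" using t by simp
  qed
  have mcy: "measure \<sigma> (cball X t) \<le> measure \<sigma> (ball y (3 * t))"
    by (rule finite_measure_mono[OF sub]) (simp add: sets)
  show ?thesis
  proof (cases "3 * t \<le> rs")
    case True
    then have "emeasure \<sigma> (ball y (3 * t)) \<le> ennreal (M * (3 * t) powr \<alpha>)"
      using ar y(2) t by (auto simp: upper_ahlfors_regular_def)
    then have "measure \<sigma> (ball y (3 * t)) \<le> M * (3 * t) powr \<alpha>"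
      using M0 by (simp add: emeasure_eq_measure ennreal_le_iff)
    then show ?thesis using mb mc mcy by linarith
  next
    case False
    have "rs powr \<alpha> \<le> (3 * t) powr \<alpha>"
      using False rs0 a1 by (intro powr_mono2) auto
    then have "M * rs powr \<alpha> \<le> M * (3 * t) powr \<alpha>" using M0 by simp
    then show ?thesis using Phile Phipos by linarith
  qed
qed

theorem corollary4p8:
  fixes \<alpha> :: real
  assumes "1 < \<alpha>"
  shows "\<exists>c>0. \<forall>(\<sigma>::(real^2) measure) M rs.
    sets \<sigma> = sets borel \<longrightarrow> finite_measure \<sigma> \<longrightarrow>
    upper_ahlfors_regular \<alpha> M rs \<sigma> \<longrightarrow>
    0 < measure \<sigma> UNIV \<longrightarrow> measure \<sigma> UNIV \<le> M * rs powr \<alpha> \<longrightarrow>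
    integrable \<sigma> (\<lambda>x. x) \<longrightarrow>
    (let \<Phi> = measure \<sigma> UNIV;
         X = (1 / \<Phi>) *\<^sub>R integral\<^sup>L \<sigma> (\<lambda>x. x);
         r = (1 / \<Phi>) * integral\<^sup>L \<sigma> (\<lambda>x. norm (x - X))
     in M powr (1 / \<alpha>) * r \<ge> c * \<Phi> powr (1 / \<alpha>))"
proof (intro exI[of _ "1 / (6 * 4 powr (1 / \<alpha>))"] conjI allI impI)
  show "0 < 1 / (6 * 4 powr (1 / \<alpha>))" by simp
  fix \<sigma> :: "(real^2) measure" and M rs
  assume sets: "sets \<sigma> = sets borel" and fin: "finite_measure \<sigma>"
    and ar: "upper_ahlfors_regular \<alpha> M rs \<sigma>"
    and Phipos: "0 < measure \<sigma> UNIV" and Phile: "measure \<sigma> UNIV \<le> M * rs powr \<alpha>"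
    and int: "integrable \<sigma> (\<lambda>x. x)"
  define \<Phi> where "\<Phi> = measure \<sigma> UNIV"
  define X where "X = (1 / \<Phi>) *\<^sub>R integral\<^sup>L \<sigma> (\<lambda>x. x)"
  define I where "I = integral\<^sup>L \<sigma> (\<lambda>x. norm (x - X))"
  define r where "r = (1 / \<Phi>) * I"
  have M0: "M > 0" using ar by (auto simp: upper_ahlfors_regular_def)
  have P0: "\<Phi> > 0" using Phipos \<Phi>_def by simp
  have intn: "integrable \<sigma> (\<lambda>x. norm (x - X))"
    by (rule integrable_norm[OF Bochner_Integration.integrable_diff[OF int finite_measure.integrable_const[OF fin]]])
  define \<rho> where "\<rho> = (\<Phi> / (4 * M)) powr (1 / \<alpha>)"
  have rho0: "\<rho> > 0" using P0 M0 by (simp add: \<rho>_def)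
  have rhoa: "\<rho> powr \<alpha> = \<Phi> / (4 * M)"
    using assms P0 M0 by (simp add: \<rho>_def powr_powr)
  have rhoe: "\<rho> = \<Phi> powr (1 / \<alpha>) / (4 powr (1 / \<alpha>) * M powr (1 / \<alpha>))"
    using P0 M0 by (simp add: \<rho>_def powr_divide powr_mult)
  have Mp: "M powr (1 / \<alpha>) > 0" using M0 by simp
  have "M powr (1 / \<alpha>) * r \<ge> 1 / (6 * 4 powr (1 / \<alpha>)) * \<Phi> powr (1 / \<alpha>)"
  proof (rule ccontr)
    assume "\<not> ?thesis"
    then have lt: "M powr (1 / \<alpha>) * r < 1 / (6 * 4 powr (1 / \<alpha>)) * \<Phi> powr (1 / \<alpha>)" by simp
    have "1 / (6 * 4 powr (1 / \<alpha>)) * \<Phi> powr (1 / \<alpha>) = M powr (1 / \<alpha>) * (\<rho> / 6)"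
      using Mp by (simp add: rhoe field_simps)
    with lt Mp have "r < \<rho> / 6" by (metis mult_less_cancel_left_pos)
    then have "2 * I \<le> (\<rho> / 3) * \<Phi>" using P0 by (simp add: r_def field_simps)
    then have "\<Phi> / 2 \<le> M * (3 * (\<rho> / 3)) powr \<alpha>"
      using key[OF sets fin ar assms \<Phi>_def P0 _ intn, of "\<rho> / 3"] Phile rho0
      by (simp add: \<Phi>_def I_def)
    also have "\<dots> = \<Phi> / 4" using rhoa M0 by simp
    finally show False using P0 by simp
  qed
  then show "let \<Phi> = measure \<sigma> UNIV;
         X = (1 / \<Phi>) *\<^sub>R integral\<^sup>L \<sigma> (\<lambda>x. x);
         r = (1 / \<Phi>) * integral\<^sup>L \<sigma> (\<lambda>x. norm (x - X))
     in M powr (1 / \<alpha>) * r \<ge> 1 / (6 * 4 powr (1 / \<alpha>)) * \<Phi> powr (1 / \<alpha>)"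
    by (simp only: Let_def r_def I_def X_def \<Phi>_def)
qed

end
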